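(* For all sufficiently large $n$, for every $k\ge t$ with $d_{\max}+1<n-k\le n/e^2$, we have $a_{k_1,\dots,k_x}<n^{-(2+x)}$ for every tuple $(k_1,\dots,k_x)$ of integers with $t_i\le k_i\le a_i$ and $\sum_i k_i=k$, and $\alpha_k\le\frac{1}{n^2}$.
   Context: Random graph model: $V$ is a set of $n$ vertices, $B\subseteq V$ a target set with $|B|=t$, each $v\in V$ has a prescribed out-degree $d_v$ with $2\le d_{\min}\le d_v\le d_{\max}$ (constants independent of $n$), and for each $v$ independently its out-neighbour set is chosen uniformly among all $d_v$-element subsets of $V$. Let $d_1,\dots,d_x$ be the distinct out-degrees, $a_i$ the number of vertices of out-degree $d_i$, $t_i$ the number of vertices of $B$ of out-degree $d_i$. For $S\supseteq B$ containing $k_i$ vertices of out-degree $d_i$, $R(k_1,\dots,k_x)$ is the probability that every vertex of $S$ has a directed path to $B$ lying inside $S$. For $k=\sum_i k_i$ with $t_i\le k_i\le a_i$, $a_{k_1,\dots,k_x}=\left(\prod_{i=1}^x\binom{a_i-t_i}{k_i-t_i}\left(\binom{n-k}{d_i}/\binom{n}{d_i}\right)^{a_i-k_i}\right)R(k_1,\dots,k_x)$, with the factor $(\binom{n-k}{d_i}/\binom{n}{d_i})^{a_i-k_i}$ equal to $1$ when $a_i=k_i$, and $\alpha_k=\sum_{\sum_i k_i=k,\ t_i\le k_i\le a_i}a_{k_1,\dots,k_x}$ (which is the probability that the set of vertices having a directed path to $B$ has exactly $k$ elements). *)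

theory Defs
  imports Complex_Main "HOL-Library.FuncSet"
begin

text \<open>Outcome space of the random digraph: each v in V picks an out-neighbour
  set, a d v element subset of V; uniform product measure = uniform on this finite set.\<close>
definition outcomes :: "'a set \<Rightarrow> ('a \<Rightarrow> nat) \<Rightarrow> ('a \<Rightarrow> 'a set) set" where
  "outcomes V d = PiE V (\<lambda>v. {A. A \<subseteq> V \<and> card A = d v})"

definition edges_in :: "('a \<Rightarrow> 'a set) \<Rightarrow> 'a set \<Rightarrow> ('a \<times> 'a) set" where
  "edges_in Nb S = {(u, w). u \<in> S \<and> w \<in> S \<and> w \<in> Nb u}"

definition all_reach :: "('a \<Rightarrow> 'a set) \<Rightarrow> 'a set \<Rightarrow> 'a set \<Rightarrow> bool" where
  "all_reach Nb B S \<longleftrightarrow> (\<forall>v\<in>S. \<exists>b\<in>B. (v, b) \<in> (edges_in Nb S)\<^sup>*)"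

definition R_set :: "'a set \<Rightarrow> ('a \<Rightarrow> nat) \<Rightarrow> 'a set \<Rightarrow> 'a set \<Rightarrow> real" where
  "R_set V d B S = real (card {Nb \<in> outcomes V d. all_reach Nb B S}) / real (card (outcomes V d))"

definition cnt :: "('a \<Rightarrow> nat) \<Rightarrow> 'a set \<Rightarrow> nat \<Rightarrow> nat" where
  "cnt d X j = card {v \<in> X. d v = j}"

text \<open>R(k_1,...,k_x): tuples are indexed by the distinct degrees j in d ` V;
  kk j is the number of vertices of out-degree j in S.  R is evaluated at a set
  S with B \<subseteq> S \<subseteq> V having these counts (well defined by symmetry).\<close>
definition R_tuple :: "'a set \<Rightarrow> ('a \<Rightarrow> nat) \<Rightarrow> 'a set \<Rightarrow> (nat \<Rightarrow> nat) \<Rightarrow> real" where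
  "R_tuple V d B kk = R_set V d B
     (SOME S. B \<subseteq> S \<and> S \<subseteq> V \<and> (\<forall>j\<in>d ` V. cnt d S j = kk j))"

definition a_tuple :: "'a set \<Rightarrow> ('a \<Rightarrow> nat) \<Rightarrow> 'a set \<Rightarrow> (nat \<Rightarrow> nat) \<Rightarrow> real" where
  "a_tuple V d B kk =
     (let n = card V; k = (\<Sum>j\<in>d ` V. kk j) in
      (\<Prod>j\<in>d ` V. real ((cnt d V j - cnt d B j) choose (kk j - cnt d B j))
          * (real ((n - k) choose j) / real (n choose j)) ^ (cnt d V j - kk j))
      * R_tuple V d B kk)"

text \<open>Admissible tuples: t_j \<le> kk j \<le> a_j for each degree j and total k.\<close>
definition tuples :: "'a set \<Rightarrow> ('a \<Rightarrow> nat) \<Rightarrow> 'a set \<Rightarrow> nat \<Rightarrow> (nat \<Rightarrow> nat) set" where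
  "tuples V d B k = {kk \<in> PiE (d ` V) (\<lambda>j. {cnt d B j..cnt d V j}). (\<Sum>j\<in>d ` V. kk j) = k}"

definition alpha :: "'a set \<Rightarrow> ('a \<Rightarrow> nat) \<Rightarrow> 'a set \<Rightarrow> nat \<Rightarrow> real" where
  "alpha V d B k = (\<Sum>kk\<in>tuples V d B k. a_tuple V d B kk)"

end

theory Submission
  imports Defs
begin

lemma choose_mult_le: "(a choose b) * (c choose e) \<le> (a + c) choose (b + e)"
proof -
  have "(a choose b) * (c choose (b + e - b)) \<le> (\<Sum>k\<le>b+e. (a choose k) * (c choose (b + e - k)))"
    by (rule member_le_sum) auto
  also have "\<dots> = (a + c) choose (b + e)" by (rule vandermonde)
  finally show ?thesis by simp
qed

lemma prod_choose_le:
  assumes "finite D"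
  shows "(\<Prod>j\<in>D. (f j choose g j)) \<le> (\<Sum>j\<in>D. f j) choose (\<Sum>j\<in>D. g j)"
  using assms
proof (induction D rule: finite_induct)
  case empty then show ?case by simp
next
  case (insert a D)
  have "(\<Prod>j\<in>insert a D. (f j choose g j)) = (f a choose g a) * (\<Prod>j\<in>D. (f j choose g j))"
    using insert by simp
  also have "\<dots> \<le> (f a choose g a) * ((\<Sum>j\<in>D. f j) choose (\<Sum>j\<in>D. g j))"
    using insert by simp
  also have "\<dots> \<le> (f a + (\<Sum>j\<in>D. f j)) choose (g a + (\<Sum>j\<in>D. g j))"
    by (rule choose_mult_le)
  finally show ?case using insert by simp
qed

lemma choose_ratio_le:
  assumes "m \<le> n" "2 \<le> j" "0 < n"
  shows "real (m choose j) / real (n choose j) \<le> (real m / real n) ^ 2"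
proof (cases "j \<le> m")
  case False
  then show ?thesis by (simp add: binomial_eq_0)
next
  case True
  have jn: "j \<le> n" using True assms by simp
  have "real (m choose j) / real (n choose j) =
        (\<Prod>i\<in>{0..<j}. real (m - i) / real (j - i)) / (\<Prod>i\<in>{0..<j}. real (n - i) / real (j - i))"
    using binomial_altdef_of_nat[OF True, where 'a=real] binomial_altdef_of_nat[OF jn, where 'a=real]
    by simp
  also have "\<dots> = (\<Prod>i\<in>{0..<j}. (real (m - i) / real (j - i)) / (real (n - i) / real (j - i)))"
    by (rule prod_dividef[symmetric])
  also have "\<dots> = (\<Prod>i\<in>{0..<j}. real (m - i) / real (n - i))"
    by (rule prod.cong) auto
  also have "\<dots> \<le> (\<Prod>i\<in>{0..<j}. real m / real n)"
  proof (rule prod_mono)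
    fix i assume i: "i \<in> {0..<j}"
    then have im: "i < m" "i < n" using True jn by auto
    have "real (m - i) * real n \<le> real m * real (n - i)"
      using im assms by (simp add: of_nat_diff algebra_simps mult_left_mono)
    then show "0 \<le> real (m - i) / real (n - i) \<and> real (m - i) / real (n - i) \<le> real m / real n"
      using im assms by (simp add: divide_simps)
  qed
  also have "\<dots> = (real m / real n) ^ j" by simp
  also have "\<dots> \<le> (real m / real n) ^ 2"
    by (rule power_decreasing) (use assms in auto)
  finally show ?thesis .
qed

lemma R_bounds: "finite V \<Longrightarrow> 0 \<le> R_tuple V d B kk \<and> R_tuple V d B kk \<le> 1"
proof -
  assume fV: "finite V"
  have fO: "finite (outcomes V d)" unfolding outcomes_def
    using fV by (intro finite_PiE) (auto intro: finite_subset[of _ "Pow V"])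
  show ?thesis
    unfolding R_tuple_def R_set_def
    using card_mono[OF fO, of "{Nb \<in> outcomes V d. all_reach Nb B _}"]
    by (auto simp: divide_le_eq_1)
qed

lemma sum_cnt: "finite V \<Longrightarrow> (\<Sum>j\<in>d ` V. cnt d V j) = card V"
  unfolding cnt_def using sum.group[of V "d ` V" d "\<lambda>_. 1::nat"] by simp

lemma term_bound:
  assumes fV: "finite V" and BV: "B \<subseteq> V" and d2: "\<forall>v\<in>V. 2 \<le> d v"
    and kk: "\<forall>j\<in>d ` V. cnt d B j \<le> kk j \<and> kk j \<le> cnt d V j"
    and sk: "(\<Sum>j\<in>d ` V. kk j) = k" and n0: "0 < card V"
  shows "a_tuple V d B kk \<le> real (card V choose (card V - k)) * ((real (card V - k) / real (card V)) ^ 2) ^ (card V - k)"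
proof -
  define n where "n = card V"
  define m where "m = n - k"
  define D where "D = d ` V"
  define q where "q = (real m / real n) ^ 2"
  have fD: "finite D" using fV D_def by simp
  have sa: "(\<Sum>j\<in>D. cnt d V j) = n" using sum_cnt[OF fV] D_def n_def by simp
  have kn: "k \<le> n" unfolding sa[symmetric] sk[symmetric] D_def
    by (rule sum_mono) (use kk in auto)
  have sm: "(\<Sum>j\<in>D. cnt d V j - kk j) = m"
    using sum_subtractf_nat[of D kk "cnt d V"] kk sa sk unfolding m_def D_def by auto
  have mn: "m \<le> n" using m_def by simp
  have q0: "0 \<le> q" using q_def by simp
  have step: "(\<Prod>j\<in>D. real ((cnt d V j - cnt d B j) choose (kk j - cnt d B j))
          * (real (m choose j) / real (n choose j)) ^ (cnt d V j - kk j))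
       \<le> (\<Prod>j\<in>D. real (cnt d V j choose (cnt d V j - kk j)) * q ^ (cnt d V j - kk j))"
  proof (rule prod_mono, intro conjI)
    fix j assume j: "j \<in> D"
    then have j2: "2 \<le> j" using d2 D_def by auto
    have tk: "cnt d B j \<le> kk j" "kk j \<le> cnt d V j" using kk j D_def by auto
    have e1: "(cnt d V j - cnt d B j) choose (kk j - cnt d B j)
            = (cnt d V j - cnt d B j) choose (cnt d V j - kk j)"
      using binomial_symmetric[of "kk j - cnt d B j" "cnt d V j - cnt d B j"] tk
      by (simp add: diff_diff_cancel)
    have e2: "((cnt d V j - cnt d B j) choose (cnt d V j - kk j)) * (cnt d B j choose 0)
          \<le> (cnt d V j - cnt d B j + cnt d B j) choose (cnt d V j - kk j + 0)"
      by (rule choose_mult_le)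
    have e3: "(cnt d V j - cnt d B j) choose (kk j - cnt d B j) \<le> cnt d V j choose (cnt d V j - kk j)"
      using e1 e2 tk by simp
    have Q: "real (m choose j) / real (n choose j) \<le> q"
      unfolding q_def using choose_ratio_le[OF mn j2] n0 n_def by simp
    show "0 \<le> real ((cnt d V j - cnt d B j) choose (kk j - cnt d B j))
          * (real (m choose j) / real (n choose j)) ^ (cnt d V j - kk j)" by simp
    show "real ((cnt d V j - cnt d B j) choose (kk j - cnt d B j))
          * (real (m choose j) / real (n choose j)) ^ (cnt d V j - kk j)
         \<le> real (cnt d V j choose (cnt d V j - kk j)) * q ^ (cnt d V j - kk j)"
      by (rule mult_mono) (use e3 Q in \<open>auto intro: power_mono\<close>)
  qed
  also have "\<dots> = real (\<Prod>j\<in>D. (cnt d V j choose (cnt d V j - kk j))) * q ^ m"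
    by (simp add: prod.distrib power_sum sm[symmetric])
  also have "\<dots> \<le> real (n choose m) * q ^ m"
    using prod_choose_le[OF fD, of "cnt d V" "\<lambda>j. cnt d V j - kk j"] sa sm q0
    by (intro mult_right_mono) (simp_all del: of_nat_prod)
  finally have P: "(\<Prod>j\<in>D. real ((cnt d V j - cnt d B j) choose (kk j - cnt d B j))
          * (real (m choose j) / real (n choose j)) ^ (cnt d V j - kk j)) \<le> real (n choose m) * q ^ m" .
  have R: "0 \<le> R_tuple V d B kk" "R_tuple V d B kk \<le> 1" using R_bounds[OF fV] by auto
  have P0: "0 \<le> (\<Prod>j\<in>D. real ((cnt d V j - cnt d B j) choose (kk j - cnt d B j))
          * (real (m choose j) / real (n choose j)) ^ (cnt d V j - kk j))"
    by (rule prod_nonneg) simp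
  have "a_tuple V d B kk = (\<Prod>j\<in>D. real ((cnt d V j - cnt d B j) choose (kk j - cnt d B j))
          * (real (m choose j) / real (n choose j)) ^ (cnt d V j - kk j)) * R_tuple V d B kk"
    unfolding a_tuple_def Let_def m_def n_def D_def sk by simp
  also have "\<dots> \<le> (\<Prod>j\<in>D. real ((cnt d V j - cnt d B j) choose (kk j - cnt d B j))
          * (real (m choose j) / real (n choose j)) ^ (cnt d V j - kk j))"
    using mult_left_mono[OF R(2) P0] by simp
  also have "\<dots> \<le> real (n choose m) * q ^ m" by (rule P)
  finally show ?thesis unfolding q_def m_def n_def .
qed

definition hh :: "real \<Rightarrow> nat \<Rightarrow> real" where
  "hh N i = real i ^ (2 * i) / (fact i * N ^ i)"

lemma pow_e: assumes "1 \<le> i" shows "real (Suc i) ^ i \<le> exp 1 * real i ^ i"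
proof -
  have "1 + 1 / real i \<le> exp (1 / real i)" by (rule exp_ge_add_one_self)
  then have "(1 + 1 / real i) ^ i \<le> exp (1 / real i) ^ i"
    by (rule power_mono) (use assms in simp)
  also have "\<dots> = exp (real i * (1 / real i))" by (rule exp_of_nat_mult[symmetric])
  also have "\<dots> = exp 1" using assms by simp
  finally have "(1 + 1 / real i) ^ i \<le> exp 1" .
  moreover have "1 + 1 / real i = real (Suc i) / real i" using assms by (simp add: field_simps)
  ultimately have "(real (Suc i) / real i) ^ i \<le> exp 1" by simp
  then show ?thesis using assms by (simp add: power_divide divide_simps)
qed

lemma hh_step:
  assumes "1 \<le> i" "real (Suc i) * exp 2 \<le> N"
  shows "hh N (Suc i) \<le> hh N i"
proof -
  have N0: "0 < N" using assms(2) by (smt (verit) exp_gt_zero of_nat_0_less_iff zero_less_Suc mult_pos_pos)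
  have a: "real (Suc i) ^ (2 * i) \<le> exp 2 * real i ^ (2 * i)"
  proof -
    have "real (Suc i) ^ (2 * i) = (real (Suc i) ^ i) ^ 2" by (simp add: power_mult mult.commute)
    also have "\<dots> \<le> (exp 1 * real i ^ i) ^ 2"
      by (rule power_mono[OF pow_e[OF assms(1)]]) simp
    also have "\<dots> = exp 2 * real i ^ (2 * i)"
      by (simp add: power_mult_distrib power_mult mult.commute flip: exp_of_nat_mult)
    finally show ?thesis .
  qed
  have b: "real (Suc i) ^ (2 * i + 1) \<le> N * real i ^ (2 * i)"
  proof -
    have "real (Suc i) ^ (2 * i + 1) = real (Suc i) * real (Suc i) ^ (2 * i)" by simp
    also have "\<dots> \<le> real (Suc i) * (exp 2 * real i ^ (2 * i))"
      by (rule mult_left_mono[OF a]) simp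
    also have "\<dots> \<le> N * real i ^ (2 * i)"
      using mult_right_mono[OF assms(2), of "real i ^ (2*i)"] by (simp add: mult.assoc)
    finally show ?thesis .
  qed
  have "hh N (Suc i) = (real (Suc i) * real (Suc i) ^ (2 * i + 1)) / (real (Suc i) * (fact i * N ^ (Suc i)))"
    unfolding hh_def by (simp add: fact_Suc power_add mult.assoc del: of_nat_Suc)
  also have "\<dots> = real (Suc i) ^ (2 * i + 1) / (fact i * N ^ (Suc i))"
    by (rule mult_divide_mult_cancel_left) simp
  also have "\<dots> \<le> (N * real i ^ (2 * i)) / (fact i * N ^ (Suc i))"
    by (rule divide_right_mono[OF b]) (use N0 in simp)
  also have "\<dots> = hh N i" unfolding hh_def using N0 by (simp add: field_simps)
  finally show ?thesis .
qed

lemma hh_mono: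
  assumes "m0 \<le> m" "1 \<le> m0" "real m * exp 2 \<le> N"
  shows "hh N m \<le> hh N m0"
  using assms
proof (induction m rule: dec_induct)
  case base then show ?case by simp
next
  case (step i)
  have "hh N (Suc i) \<le> hh N i" using step by (intro hh_step) auto
  also have "\<dots> \<le> hh N m0" using step.IH step.prems
    by (smt (verit) exp_gt_zero of_nat_le_iff le_SucI mult_right_mono order_refl)
  finally show ?case .
qed

lemma choose_hh:
  assumes "0 < n" "m \<le> n"
  shows "real (n choose m) * ((real m / real n) ^ 2) ^ m \<le> hh (real n) m"
proof -
  have "real (n choose m) * fact m \<le> real n ^ m"
    using binomial_fact_pow[of n m] by (metis of_nat_fact of_nat_le_iff of_nat_mult of_nat_power)
  then have c: "real (n choose m) \<le> real n ^ m / fact m" by (simp add: field_simps)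
  have "real (n choose m) * ((real m / real n) ^ 2) ^ m \<le> real n ^ m / fact m * ((real m / real n) ^ 2) ^ m"
    by (rule mult_right_mono[OF c]) simp
  also have "\<dots> = hh (real n) m" unfolding hh_def using assms
    by (simp add: power_divide power_mult[symmetric] field_simps mult.commute power_add[symmetric] flip: mult_2)
  finally show ?thesis .
qed

theorem lemma16:
  fixes Dc :: nat
  shows "\<exists>N::nat. \<forall>(V::'a set) B (d::'a \<Rightarrow> nat) k.
    finite V \<and> card V \<ge> N \<and> B \<subseteq> V \<and> (\<forall>v\<in>V. 2 \<le> d v \<and> d v \<le> Dc) \<and>
    k \<ge> card B \<and> Max (d ` V) + 1 < card V - k \<and> real (card V - k) \<le> real (card V) / exp 2
    \<longrightarrow> (\<forall>kk. (\<forall>j\<in>d ` V. cnt d B j \<le> kk j \<and> kk j \<le> cnt d V j) \<and> (\<Sum>j\<in>d ` V. kk j) = k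
             \<longrightarrow> a_tuple V d B kk < real (card V) powr (- (2 + real (card (d ` V)))))
      \<and> alpha V d B k \<le> 1 / (real (card V))\<^sup>2"
proof -
  define C :: nat where "C = (Dc + 3) ^ (2 * (Dc + 3))"
  show ?thesis
  proof (rule exI[of _ "2 ^ Dc * C + 1"], intro allI impI)
    fix V :: "'a set" and B and d :: "'a \<Rightarrow> nat" and k
    assume H: "finite V \<and> card V \<ge> 2 ^ Dc * C + 1 \<and> B \<subseteq> V \<and> (\<forall>v\<in>V. 2 \<le> d v \<and> d v \<le> Dc) \<and>
      k \<ge> card B \<and> Max (d ` V) + 1 < card V - k \<and> real (card V - k) \<le> real (card V) / exp 2"
    define n where "n = card V"
    define D where "D = d ` V"
    define x where "x = card D"
    define m where "m = n - k"
    define M where "M = Max D"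
    have fV: "finite V" and BV: "B \<subseteq> V" and dV: "\<forall>v\<in>V. 2 \<le> d v \<and> d v \<le> Dc"
      and nN: "2 ^ Dc * C + 1 \<le> n" and Mm: "M + 1 < m" and me: "real m \<le> real n / exp 2"
      using H by (auto simp: n_def m_def M_def D_def)
    have C1: "1 \<le> C" unfolding C_def by simp
    have n0: "0 < n" using nN by simp
    have Vne: "V \<noteq> {}" using n0 n_def by auto
    have fD: "finite D" using fV D_def by simp
    have Dne: "D \<noteq> {}" using Vne D_def by simp
    have MD: "M \<in> D" using Max_in[OF fD Dne] M_def by simp
    have MDc: "M \<le> Dc" using MD dV D_def by auto
    have Dsub: "D \<subseteq> {2..M}" using Max_ge[OF fD] dV D_def M_def by auto
    have xM: "x \<le> M - 1" using card_mono[OF _ Dsub] x_def by simp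
    have M2: "2 \<le> M" using MD dV D_def by auto
    have xm: "x + 3 \<le> m" using xM Mm M2 by simp
    have xDc: "x \<le> Dc" using xM MDc by simp
    have kn: "k \<le> n" using Mm m_def by simp
    have mexp: "real m * exp 2 \<le> real n" using me by (simp add: field_simps)
    have hb: "hh (real n) (x + 3) \<le> real C / real n ^ (x + 3)"
    proof -
      have "real (x + 3) ^ (2 * (x + 3)) \<le> real (Dc + 3) ^ (2 * (Dc + 3))"
      proof -
        have "real (x + 3) ^ (2 * (x + 3)) \<le> real (Dc + 3) ^ (2 * (x + 3))"
          by (rule power_mono) (use xDc in auto)
        also have "\<dots> \<le> real (Dc + 3) ^ (2 * (Dc + 3))"
          by (rule power_increasing) (use xDc in auto)
        finally show ?thesis .
      qed
      then have num: "real (x + 3) ^ (2 * (x + 3)) \<le> real C" unfolding C_def by simp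
      have "hh (real n) (x + 3) \<le> real (x + 3) ^ (2 * (x + 3)) / (real n ^ (x + 3))"
        unfolding hh_def using n0
        by (intro divide_left_mono) (auto simp: fact_ge_1 intro!: mult_pos_pos)
      also have "\<dots> \<le> real C / real n ^ (x + 3)"
        by (rule divide_right_mono[OF num]) simp
      finally show ?thesis .
    qed
    have tb: "a_tuple V d B kk \<le> real C / real n ^ (x + 3)"
      if kk: "\<forall>j\<in>d ` V. cnt d B j \<le> kk j \<and> kk j \<le> cnt d V j" and sk: "(\<Sum>j\<in>d ` V. kk j) = k" for kk
    proof -
      have "a_tuple V d B kk \<le> real (n choose m) * ((real m / real n) ^ 2) ^ m"
        using term_bound[OF fV BV _ kk sk] dV n0 unfolding n_def m_def by auto
      also have "\<dots> \<le> hh (real n) m" by (rule choose_hh) (use n0 m_def in auto)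
      also have "\<dots> \<le> hh (real n) (x + 3)" by (rule hh_mono) (use xm mexp in auto)
      also have "\<dots> \<le> real C / real n ^ (x + 3)" by (rule hb)
      finally show ?thesis .
    qed
    have "C \<le> 2 ^ Dc * C" by simp
    then have "C < n" using nN by linarith
    then have Cn: "real C < real n" by simp
    have part1: "a_tuple V d B kk < real n powr (- (2 + real x))"
      if kk: "\<forall>j\<in>d ` V. cnt d B j \<le> kk j \<and> kk j \<le> cnt d V j" and sk: "(\<Sum>j\<in>d ` V. kk j) = k" for kk
    proof -
      have "a_tuple V d B kk \<le> real C / real n ^ (x + 3)" by (rule tb[OF kk sk])
      also have "\<dots> < real n / real n ^ (x + 3)"
        by (rule divide_strict_right_mono[OF Cn]) (use n0 in simp)
      also have "\<dots> = 1 / real n ^ (x + 2)" using n0 by (simp add: field_simps power_add numeral_3_eq_3 power2_eq_square)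
      also have "\<dots> = real n powr (- (2 + real x))"
      proof -
        have "real n powr (- (2 + real x)) = inverse (real n powr real (x + 2))"
          using powr_minus[of "real n" "real (x + 2)"] by (simp add: add.commute)
        also have "\<dots> = inverse (real n ^ (x + 2))"
        proof -
          have eq: "real n powr real (x + 2) = real n ^ (x + 2)" by (rule powr_realpow) (use n0 in simp)
          show ?thesis by (simp only: eq)
        qed
        finally show ?thesis by (simp add: divide_inverse)
      qed
      finally show ?thesis .
    qed
    have fT: "finite (tuples V d B k)" unfolding tuples_def
      by (rule finite_subset[of _ "PiE D (\<lambda>j. {cnt d B j..cnt d V j})"]) (auto simp: D_def intro!: finite_PiE fV)
    have cT: "card (tuples V d B k) \<le> (n + 1) ^ x"
    proof -
      have "card (tuples V d B k) \<le> card (PiE D (\<lambda>j. {cnt d B j..cnt d V j}))"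
        by (rule card_mono) (auto simp: tuples_def D_def intro!: finite_PiE fV)
      also have "\<dots> = (\<Prod>j\<in>D. card {cnt d B j..cnt d V j})" by (rule card_PiE[OF fD])
      also have "\<dots> \<le> (\<Prod>j\<in>D. n + 1)"
      proof (rule prod_mono, simp)
        fix j
        have "cnt d V j \<le> n" unfolding cnt_def n_def by (rule card_mono[OF fV]) auto
        then show "Suc (cnt d V j) - cnt d B j \<le> Suc n" by simp
      qed
      also have "\<dots> = (n + 1) ^ x" by (simp add: x_def)
      finally show ?thesis .
    qed
    have part2: "alpha V d B k \<le> 1 / (real n)\<^sup>2"
    proof -
      have "alpha V d B k \<le> real (card (tuples V d B k)) * (real C / real n ^ (x + 3))"
        unfolding alpha_def
        by (rule sum_bounded_above) (auto simp: tuples_def PiE_def Pi_def intro!: tb)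
      also have "\<dots> \<le> real ((n + 1) ^ x) * (real C / real n ^ (x + 3))"
        by (rule mult_right_mono) (use cT in \<open>simp only: of_nat_le_iff\<close>, simp)
      also have "\<dots> \<le> (2 ^ Dc * real n ^ x) * (real C / real n ^ (x + 3))"
      proof (rule mult_right_mono)
        have "real ((n + 1) ^ x) \<le> (2 * real n) ^ x"
          unfolding of_nat_power by (rule power_mono) (use n0 in auto)
        also have "\<dots> = 2 ^ x * real n ^ x" by (simp add: power_mult_distrib)
        also have "\<dots> \<le> 2 ^ Dc * real n ^ x"
          by (rule mult_right_mono) (use xDc in \<open>auto intro: power_increasing\<close>)
        finally show "real ((n + 1) ^ x) \<le> 2 ^ Dc * real n ^ x" .
      qed simp
      also have "\<dots> = (2 ^ Dc * real C) / (real n * (real n)\<^sup>2)"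
        using n0 by (simp add: field_simps power_add power2_eq_square numeral_3_eq_3)
      also have "\<dots> \<le> real n / (real n * (real n)\<^sup>2)"
      proof (rule divide_right_mono)
        have "2 ^ Dc * C \<le> n" using nN by simp
        then show "2 ^ Dc * real C \<le> real n" by (metis of_nat_le_iff of_nat_mult of_nat_numeral of_nat_power)
      qed simp
      also have "\<dots> = 1 / (real n)\<^sup>2" using n0 by simp
      finally show ?thesis .
    qed
    show "(\<forall>kk. (\<forall>j\<in>d ` V. cnt d B j \<le> kk j \<and> kk j \<le> cnt d V j) \<and> (\<Sum>j\<in>d ` V. kk j) = k
             \<longrightarrow> a_tuple V d B kk < real (card V) powr (- (2 + real (card (d ` V)))))
      \<and> alpha V d B k \<le> 1 / (real (card V))\<^sup>2"
      using part1 part2 unfolding n_def x_def D_def by blast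
  qed
qed

end
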